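(* Let $Q$ be a finite, simple, commutative, automorphic loop of exponent $2$ which is not associative. Let $U$ be the socle of $\mathrm{Mlt}(Q)$, a regular normal elementary abelian $2$-subgroup, viewed as a $GF(2)$-vector space (written additively) on which $\mathrm{Inn}(Q)$ acts linearly by conjugation, $u\mapsto u^h$. For $x\in Q$ write $R_x=h_xu_x$ with unique $h_x\in\mathrm{Inn}(Q)$ and $u_x\in U$; for $u\in U$ let $h_u=h_x$ where $x$ is the unique element with $u_x=u$. Then for all $u,v\in U$, $h_uh_v=h_vh_{u^{h_v}}$.
   Context: A loop is a set with a binary operation in which left and right division are uniquely solvable and which has a neutral element $1$. $R_a:x\mapsto xa$; $\mathrm{Mlt}(Q)$ is generated by all left and right translations; $\mathrm{Inn}(Q)$ is the stabilizer of $1$ in $\mathrm{Mlt}(Q)$; $Q$ is automorphic if $\mathrm{Inn}(Q)\le\mathrm{Aut}(Q)$; exponent $2$ means $x^2=1$ for all $x$; simple means no nontrivial proper normal subloops. For such $Q$, $\mathrm{Mlt}(Q)$ is a primitive group of affine type, $\mathrm{Mlt}(Q)=\mathrm{Inn}(Q)U$ with $U\cap\mathrm{Inn}(Q)=1$, and $Q$ is identified with $U$ via $u\leftrightarrow 1u$, under which $h\in\mathrm{Inn}(Q)$ acts as the linear map $u\mapsto u^h=h^{-1}uh$. Maps act on the right and are composed left to right. The map $x\mapsto u_x$ is a bijection $Q\to U$. *)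

theory Defs
  imports "HOL-Algebra.Algebra"
begin

definition is_loop :: "'a set \<Rightarrow> ('a \<Rightarrow> 'a \<Rightarrow> 'a) \<Rightarrow> 'a \<Rightarrow> bool" where
  "is_loop Q m e \<longleftrightarrow>
     e \<in> Q \<and> (\<forall>x\<in>Q. \<forall>y\<in>Q. m x y \<in> Q) \<and>
     (\<forall>x\<in>Q. m e x = x \<and> m x e = x) \<and>
     (\<forall>a\<in>Q. \<forall>b\<in>Q. (\<exists>!x. x \<in> Q \<and> m a x = b) \<and> (\<exists>!y. y \<in> Q \<and> m y a = b))"

definition rtrans :: "'a set \<Rightarrow> ('a \<Rightarrow> 'a \<Rightarrow> 'a) \<Rightarrow> 'a \<Rightarrow> ('a \<Rightarrow> 'a)" where
  "rtrans Q m a = (\<lambda>x\<in>Q. m x a)"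

definition ltrans :: "'a set \<Rightarrow> ('a \<Rightarrow> 'a \<Rightarrow> 'a) \<Rightarrow> 'a \<Rightarrow> ('a \<Rightarrow> 'a)" where
  "ltrans Q m a = (\<lambda>x\<in>Q. m a x)"

definition Mlt :: "'a set \<Rightarrow> ('a \<Rightarrow> 'a \<Rightarrow> 'a) \<Rightarrow> ('a \<Rightarrow> 'a) set" where
  "Mlt Q m = generate (BijGroup Q) (rtrans Q m ` Q \<union> ltrans Q m ` Q)"

definition MltG :: "'a set \<Rightarrow> ('a \<Rightarrow> 'a \<Rightarrow> 'a) \<Rightarrow> ('a \<Rightarrow> 'a) monoid" where
  "MltG Q m = (BijGroup Q)\<lparr>carrier := Mlt Q m\<rparr>"

definition Inn :: "'a set \<Rightarrow> ('a \<Rightarrow> 'a \<Rightarrow> 'a) \<Rightarrow> 'a \<Rightarrow> ('a \<Rightarrow> 'a) set" where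
  "Inn Q m e = {h \<in> Mlt Q m. h e = e}"

definition automorphic :: "'a set \<Rightarrow> ('a \<Rightarrow> 'a \<Rightarrow> 'a) \<Rightarrow> 'a \<Rightarrow> bool" where
  "automorphic Q m e \<longleftrightarrow> (\<forall>h\<in>Inn Q m e. \<forall>x\<in>Q. \<forall>y\<in>Q. h (m x y) = m (h x) (h y))"

definition commutative_loop :: "'a set \<Rightarrow> ('a \<Rightarrow> 'a \<Rightarrow> 'a) \<Rightarrow> bool" where
  "commutative_loop Q m \<longleftrightarrow> (\<forall>x\<in>Q. \<forall>y\<in>Q. m x y = m y x)"

definition exponent2 :: "'a set \<Rightarrow> ('a \<Rightarrow> 'a \<Rightarrow> 'a) \<Rightarrow> 'a \<Rightarrow> bool" where
  "exponent2 Q m e \<longleftrightarrow> (\<forall>x\<in>Q. m x x = e)"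

definition associative_loop :: "'a set \<Rightarrow> ('a \<Rightarrow> 'a \<Rightarrow> 'a) \<Rightarrow> bool" where
  "associative_loop Q m \<longleftrightarrow> (\<forall>x\<in>Q. \<forall>y\<in>Q. \<forall>z\<in>Q. m (m x y) z = m x (m y z))"

text \<open>Subloops and normal subloops (Bruck's definition:
  xN = Nx, (Nx)y = N(xy), y(xN) = (yx)N).\<close>

definition subloop :: "'a set \<Rightarrow> ('a \<Rightarrow> 'a \<Rightarrow> 'a) \<Rightarrow> 'a \<Rightarrow> 'a set \<Rightarrow> bool" where
  "subloop Q m e N \<longleftrightarrow> N \<subseteq> Q \<and> e \<in> N \<and> (\<forall>x\<in>N. \<forall>y\<in>N. m x y \<in> N) \<and>
     (\<forall>a\<in>N. \<forall>b\<in>N. \<forall>x\<in>Q. (m a x = b \<longrightarrow> x \<in> N) \<and> (m x a = b \<longrightarrow> x \<in> N))"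

definition normal_subloop :: "'a set \<Rightarrow> ('a \<Rightarrow> 'a \<Rightarrow> 'a) \<Rightarrow> 'a \<Rightarrow> 'a set \<Rightarrow> bool" where
  "normal_subloop Q m e N \<longleftrightarrow> subloop Q m e N \<and>
     (\<forall>x\<in>Q. \<forall>y\<in>Q.
        (\<lambda>n. m x n) ` N = (\<lambda>n. m n x) ` N \<and>
        (\<lambda>n. m (m n x) y) ` N = (\<lambda>n. m n (m x y)) ` N \<and>
        (\<lambda>n. m y (m x n)) ` N = (\<lambda>n. m (m y x) n) ` N)"

definition simple_loop :: "'a set \<Rightarrow> ('a \<Rightarrow> 'a \<Rightarrow> 'a) \<Rightarrow> 'a \<Rightarrow> bool" where
  "simple_loop Q m e \<longleftrightarrow> (\<forall>N. normal_subloop Q m e N \<longrightarrow> N = {e} \<or> N = Q)"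

definition minimal_normal :: "'g set \<Rightarrow> ('g, 'b) monoid_scheme \<Rightarrow> bool" where
  "minimal_normal N G \<longleftrightarrow> N \<lhd> G \<and> N \<noteq> {\<one>\<^bsub>G\<^esub>} \<and>
     (\<forall>M. M \<lhd> G \<and> M \<subseteq> N \<and> M \<noteq> {\<one>\<^bsub>G\<^esub>} \<longrightarrow> M = N)"

definition socle :: "('g, 'b) monoid_scheme \<Rightarrow> 'g set" where
  "socle G = generate G (\<Union>{N. minimal_normal N G})"

text \<open>Decomposition R_x = h_x u_x (maps composed left to right, i.e. as functions
  R_x = u_x \<circ> h_x, which is u_x \<otimes> h_x in BijGroup).\<close>

definition hx :: "'a set \<Rightarrow> ('a \<Rightarrow> 'a \<Rightarrow> 'a) \<Rightarrow> 'a \<Rightarrow> ('a \<Rightarrow> 'a) set \<Rightarrow> 'a \<Rightarrow> ('a \<Rightarrow> 'a)" where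
  "hx Q m e U x = (THE h. h \<in> Inn Q m e \<and>
      (\<exists>u\<in>U. rtrans Q m x = u \<otimes>\<^bsub>BijGroup Q\<^esub> h))"

definition ux :: "'a set \<Rightarrow> ('a \<Rightarrow> 'a \<Rightarrow> 'a) \<Rightarrow> 'a \<Rightarrow> ('a \<Rightarrow> 'a) set \<Rightarrow> 'a \<Rightarrow> ('a \<Rightarrow> 'a)" where
  "ux Q m e U x = (THE u. u \<in> U \<and>
      (\<exists>h\<in>Inn Q m e. rtrans Q m x = u \<otimes>\<^bsub>BijGroup Q\<^esub> h))"

definition hu :: "'a set \<Rightarrow> ('a \<Rightarrow> 'a \<Rightarrow> 'a) \<Rightarrow> 'a \<Rightarrow> ('a \<Rightarrow> 'a) set \<Rightarrow> ('a \<Rightarrow> 'a) \<Rightarrow> ('a \<Rightarrow> 'a)" where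
  "hu Q m e U u = hx Q m e U (THE x. x \<in> Q \<and> ux Q m e U x = u)"

text \<open>u^h = h^{-1} u h with left-to-right composition, i.e. h \<circ> u \<circ> h^{-1}.\<close>

definition conj_act :: "'a set \<Rightarrow> ('a \<Rightarrow> 'a) \<Rightarrow> ('a \<Rightarrow> 'a) \<Rightarrow> ('a \<Rightarrow> 'a)" where
  "conj_act Q u h = h \<otimes>\<^bsub>BijGroup Q\<^esub> u \<otimes>\<^bsub>BijGroup Q\<^esub> inv\<^bsub>BijGroup Q\<^esub> h"

end

theory Submission
  imports Defs "HOL-Library.FuncSet"
begin

lemma BG_mult: "f \<in> Bij S \<Longrightarrow> g \<in> Bij S \<Longrightarrow> f \<otimes>\<^bsub>BijGroup S\<^esub> g = compose S f g"
  by (simp add: BijGroup_def)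

lemma BG_app: "f \<in> Bij S \<Longrightarrow> g \<in> Bij S \<Longrightarrow> z \<in> S \<Longrightarrow> (f \<otimes>\<^bsub>BijGroup S\<^esub> g) z = f (g z)"
  by (simp add: BG_mult compose_def)

lemma BG_carrier: "carrier (BijGroup S) = Bij S"
  by (simp add: BijGroup_def)

lemma Bij_mem: "f \<in> Bij S \<Longrightarrow> z \<in> S \<Longrightarrow> f z \<in> S"
  using Bij_imp_funcset by blast

lemma BG_inv_fix: "f \<in> Bij S \<Longrightarrow> z \<in> S \<Longrightarrow> f z = z \<Longrightarrow> (inv\<^bsub>BijGroup S\<^esub> f) z = z"
  by (simp add: inv_BijGroup Bij_def bij_betw_def inv_into_f_eq)

lemma (in group) conj_mult: "a \<in> carrier G \<Longrightarrow> b \<in> carrier G \<Longrightarrow> c \<in> carrier G \<Longrightarrow>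
  a \<otimes> b \<otimes> inv a \<otimes> (a \<otimes> c \<otimes> inv a) = a \<otimes> (b \<otimes> c) \<otimes> inv a"
  by (simp add: m_assoc flip: m_assoc[of "inv a" a])

lemma (in group) conj_back: "a \<in> carrier G \<Longrightarrow> b \<in> carrier G \<Longrightarrow>
  a \<otimes> b \<otimes> inv a \<otimes> a = a \<otimes> b"
  by (simp add: m_assoc)

lemma BG_app3: assumes "a \<in> Bij S" "b \<in> Bij S" "c \<in> Bij S" "z \<in> S"
  shows "(a \<otimes>\<^bsub>BijGroup S\<^esub> b \<otimes>\<^bsub>BijGroup S\<^esub> c) z = a (b (c z))"
proof -
  have "a \<otimes>\<^bsub>BijGroup S\<^esub> b \<in> Bij S"
    using assms monoid.m_closed[OF group.is_monoid[OF group_BijGroup], of a S b] by (simp add: BG_carrier)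
  then show ?thesis using assms BG_app Bij_mem by metis
qed

lemma BG_inv_app: assumes "a \<in> Bij S" "z \<in> S" shows "a ((inv\<^bsub>BijGroup S\<^esub> a) z) = z"
proof -
  have ib: "inv\<^bsub>BijGroup S\<^esub> a \<in> Bij S"
    using assms group.inv_closed[OF group_BijGroup, of a S] by (simp add: BG_carrier)
  have "a \<otimes>\<^bsub>BijGroup S\<^esub> inv\<^bsub>BijGroup S\<^esub> a = \<one>\<^bsub>BijGroup S\<^esub>"
    using assms group.r_inv[OF group_BijGroup, of a S] by (simp add: BG_carrier)
  then have "(a \<otimes>\<^bsub>BijGroup S\<^esub> inv\<^bsub>BijGroup S\<^esub> a) z = z" using assms(2) by (simp add: BijGroup_def)
  then show ?thesis using BG_app[OF assms(1) ib assms(2)] by simp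
qed

lemma ex1_uniq: "\<exists>!z. P z \<Longrightarrow> P x \<Longrightarrow> P y \<Longrightarrow> x = y" by blast

locale LL =
  fixes Q :: "'a set" and m and e and U :: "('a \<Rightarrow> 'a) set"
  assumes loop: "is_loop Q m e" and aut: "automorphic Q m e"
    and U_normal: "U \<lhd> MltG Q m"
    and U_regular: "\<forall>x\<in>Q. \<exists>!u. u \<in> U \<and> u e = x"
begin

interpretation G: group "BijGroup Q" by (rule group_BijGroup)

lemma e_in: "e \<in> Q" using loop by (simp add: is_loop_def)

lemma loop_cl_all: "\<forall>x\<in>Q. \<forall>y\<in>Q. m x y \<in> Q"
  using loop[unfolded is_loop_def] by (elim conjE)

lemma loop_cl: "x \<in> Q \<Longrightarrow> y \<in> Q \<Longrightarrow> m x y \<in> Q"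
  using loop_cl_all by blast

lemma loop_unit_all: "\<forall>x\<in>Q. m e x = x \<and> m x e = x"
  using loop[unfolded is_loop_def] by (elim conjE)

lemma loop_all: "\<forall>a\<in>Q. \<forall>b\<in>Q. (\<exists>!x. x \<in> Q \<and> m a x = b) \<and> (\<exists>!y. y \<in> Q \<and> m y a = b)"
  using loop[unfolded is_loop_def] by (elim conjE)

lemma loop_sol: "a \<in> Q \<Longrightarrow> b \<in> Q \<Longrightarrow> (\<exists>!x. x \<in> Q \<and> m a x = b) \<and> (\<exists>!y. y \<in> Q \<and> m y a = b)"
  using loop_all by blast

lemma rtrans_Bij: assumes "a \<in> Q" shows "rtrans Q m a \<in> Bij Q"
proof -
  have sol: "\<And>b. b \<in> Q \<Longrightarrow> \<exists>!z. z \<in> Q \<and> m z a = b"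
    by (rule conjunct2[OF loop_sol[OF assms]])
  have inj: "inj_on (\<lambda>x. m x a) Q"
  proof (rule inj_onI)
    fix x y assume xy: "x \<in> Q" "y \<in> Q" "m x a = m y a"
    have mq: "m x a \<in> Q" using loop_cl assms xy(1) by blast
    show "x = y"
      by (rule ex1_uniq[OF sol[OF mq]]) (simp_all add: xy)
  qed
  have sur: "(\<lambda>x. m x a) ` Q = Q"
  proof
    show "(\<lambda>x. m x a) ` Q \<subseteq> Q" using loop_cl assms by blast
    show "Q \<subseteq> (\<lambda>x. m x a) ` Q"
    proof
      fix b assume bQ: "b \<in> Q"
      obtain z where z: "z \<in> Q \<and> m z a = b" using ex1_implies_ex[OF sol[OF bQ]] by (elim exE)
      then show "b \<in> (\<lambda>x. m x a) ` Q" by force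
    qed
  qed
  have "bij_betw (\<lambda>x. m x a) Q Q" using inj sur by (simp only: bij_betw_def)
  then have "bij_betw (\<lambda>x\<in>Q. m x a) Q Q" by (simp only: bij_betw_restrict_eq)
  then show ?thesis unfolding Bij_def rtrans_def by simp
qed

lemma ltrans_Bij: assumes "a \<in> Q" shows "ltrans Q m a \<in> Bij Q"
proof -
  have sol: "\<And>b. b \<in> Q \<Longrightarrow> \<exists>!z. z \<in> Q \<and> m a z = b"
    by (rule conjunct1[OF loop_sol[OF assms]])
  have inj: "inj_on (\<lambda>x. m a x) Q"
  proof (rule inj_onI)
    fix x y assume xy: "x \<in> Q" "y \<in> Q" "m a x = m a y"
    have mq: "m a x \<in> Q" using loop_cl assms xy(1) by blast
    show "x = y"
      by (rule ex1_uniq[OF sol[OF mq]]) (simp_all add: xy)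
  qed
  have sur: "(\<lambda>x. m a x) ` Q = Q"
  proof
    show "(\<lambda>x. m a x) ` Q \<subseteq> Q" using loop_cl assms by blast
    show "Q \<subseteq> (\<lambda>x. m a x) ` Q"
    proof
      fix b assume bQ: "b \<in> Q"
      obtain z where z: "z \<in> Q \<and> m a z = b" using ex1_implies_ex[OF sol[OF bQ]] by (elim exE)
      then show "b \<in> (\<lambda>x. m a x) ` Q" by force
    qed
  qed
  have "bij_betw (\<lambda>x. m a x) Q Q" using inj sur by (simp only: bij_betw_def)
  then have "bij_betw (\<lambda>x\<in>Q. m a x) Q Q" by (simp only: bij_betw_restrict_eq)
  then show ?thesis unfolding Bij_def ltrans_def by simp
qed

lemma Mlt_sub: "subgroup (Mlt Q m) (BijGroup Q)"
  unfolding Mlt_def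
proof (rule G.generate_is_subgroup)
  show "rtrans Q m ` Q \<union> ltrans Q m ` Q \<subseteq> carrier (BijGroup Q)"
    unfolding BG_carrier using rtrans_Bij ltrans_Bij by blast
qed

lemma Mlt_Bij: "h \<in> Mlt Q m \<Longrightarrow> h \<in> Bij Q"
  using subgroup.subset[OF Mlt_sub] BG_carrier by blast

lemma rtrans_Mlt: "a \<in> Q \<Longrightarrow> rtrans Q m a \<in> Mlt Q m"
  unfolding Mlt_def by (rule generate.incl) blast

lemma U_Mlt: "U \<subseteq> Mlt Q m"
  using subgroup.subset[OF normal_imp_subgroup[OF U_normal]] by (simp add: MltG_def)

lemma U_Bij: "u \<in> U \<Longrightarrow> u \<in> Bij Q"
  using U_Mlt Mlt_Bij by blast

lemma conj_U: assumes "h \<in> Mlt Q m" "u \<in> U"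
  shows "h \<otimes>\<^bsub>BijGroup Q\<^esub> u \<otimes>\<^bsub>BijGroup Q\<^esub> inv\<^bsub>BijGroup Q\<^esub> h \<in> U"
proof -
  have "h \<otimes>\<^bsub>MltG Q m\<^esub> u \<otimes>\<^bsub>MltG Q m\<^esub> inv\<^bsub>MltG Q m\<^esub> h \<in> U"
    using normal.inv_op_closed2[OF U_normal] assms by (simp add: MltG_def)
  moreover have "inv\<^bsub>MltG Q m\<^esub> h = inv\<^bsub>BijGroup Q\<^esub> h"
    unfolding MltG_def using G.m_inv_consistent[OF Mlt_sub assms(1)] .
  ultimately show ?thesis by (simp add: MltG_def)
qed

definition u0 where "u0 x = (THE u. u \<in> U \<and> u e = x)"

lemma u0_ex1: "x \<in> Q \<Longrightarrow> \<exists>!u. u \<in> U \<and> u e = x"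
  by (rule bspec[OF U_regular])

lemma u0: "x \<in> Q \<Longrightarrow> u0 x \<in> U \<and> u0 x e = x"
  unfolding u0_def by (rule theI'[OF u0_ex1])

lemma u0_uniq: "x \<in> Q \<Longrightarrow> u \<in> U \<Longrightarrow> u e = x \<Longrightarrow> u0 x = u"
  by (rule ex1_uniq[OF u0_ex1]) (simp_all add: u0)

definition h0 where "h0 x = inv\<^bsub>BijGroup Q\<^esub> (u0 x) \<otimes>\<^bsub>BijGroup Q\<^esub> rtrans Q m x"

lemma rtrans_e: "x \<in> Q \<Longrightarrow> rtrans Q m x e = x"
  using loop_unit_all e_in by (simp add: rtrans_def)

lemma h0_Inn: assumes "x \<in> Q" shows "h0 x \<in> Inn Q m e"
proof -
  have u: "u0 x \<in> Mlt Q m" using u0[OF assms] U_Mlt by blast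
  have "h0 x \<in> Mlt Q m" unfolding h0_def
    using subgroup.m_closed[OF Mlt_sub subgroup.m_inv_closed[OF Mlt_sub u] rtrans_Mlt[OF assms]] .
  moreover have "h0 x e = e"
  proof -
    have ub: "u0 x \<in> Bij Q" using u Mlt_Bij by blast
    have "h0 x e = (inv\<^bsub>BijGroup Q\<^esub> (u0 x)) x" unfolding h0_def
      using BG_app[OF _ rtrans_Bij[OF assms] e_in] ub rtrans_e[OF assms]
        G.inv_closed BG_carrier by metis
    also have "\<dots> = e" using ub u0[OF assms] e_in assms
      by (simp add: inv_BijGroup Bij_def bij_betw_def inv_into_f_eq)
    finally show ?thesis .
  qed
  ultimately show ?thesis by (simp add: Inn_def)
qed

lemma decomp: "x \<in> Q \<Longrightarrow> rtrans Q m x = u0 x \<otimes>\<^bsub>BijGroup Q\<^esub> h0 x"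
  unfolding h0_def using u0 U_Bij rtrans_Bij BG_carrier
  by (metis G.inv_solve_left G.inv_closed G.m_closed)

lemma uniq: assumes "x \<in> Q" "u \<in> U" "h \<in> Inn Q m e" "rtrans Q m x = u \<otimes>\<^bsub>BijGroup Q\<^esub> h"
  shows "u = u0 x \<and> h = h0 x"
proof -
  have ub: "u \<in> Bij Q" using U_Bij assms by blast
  have hb: "h \<in> Bij Q" using assms(3) Mlt_Bij by (simp add: Inn_def)
  have "u e = x" using rtrans_e[OF assms(1)] assms(4) BG_app[OF ub hb e_in] assms(3)
    by (simp add: Inn_def)
  then have "u = u0 x" using u0_uniq assms by metis
  moreover have "h = h0 x" unfolding h0_def using assms(4) ub hb rtrans_Bij[OF assms(1)]
    by (metis BG_carrier G.inv_solve_left \<open>u = u0 x\<close>)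
  ultimately show ?thesis by blast
qed

lemma hx_eq: assumes "x \<in> Q" shows "hx Q m e U x = h0 x"
  unfolding hx_def
proof (rule the_equality)
  show "h0 x \<in> Inn Q m e \<and> (\<exists>u\<in>U. rtrans Q m x = u \<otimes>\<^bsub>BijGroup Q\<^esub> h0 x)"
    using h0_Inn assms decomp u0 by blast
  show "\<And>h. h \<in> Inn Q m e \<and> (\<exists>u\<in>U. rtrans Q m x = u \<otimes>\<^bsub>BijGroup Q\<^esub> h) \<Longrightarrow> h = h0 x"
    using uniq assms by blast
qed

lemma ux_eq: assumes "x \<in> Q" shows "ux Q m e U x = u0 x"
  unfolding ux_def
proof (rule the_equality)
  show "u0 x \<in> U \<and> (\<exists>h\<in>Inn Q m e. rtrans Q m x = u0 x \<otimes>\<^bsub>BijGroup Q\<^esub> h)"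
    using h0_Inn assms decomp u0 by blast
  show "\<And>u. u \<in> U \<and> (\<exists>h\<in>Inn Q m e. rtrans Q m x = u \<otimes>\<^bsub>BijGroup Q\<^esub> h) \<Longrightarrow> u = u0 x"
    using uniq assms by blast
qed

lemma hu_eq: assumes "v \<in> U" shows "hu Q m e U v = h0 (v e)"
proof -
  have ve: "v e \<in> Q" using Bij_mem[OF U_Bij[OF assms] e_in] .
  have "(THE x. x \<in> Q \<and> ux Q m e U x = v) = v e"
  proof (rule the_equality)
    show "v e \<in> Q \<and> ux Q m e U (v e) = v" using ve ux_eq u0_uniq assms by metis
    show "\<And>x. x \<in> Q \<and> ux Q m e U x = v \<Longrightarrow> x = v e" using ux_eq u0 by metis
  qed
  then show ?thesis unfolding hu_def using hx_eq ve by simp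
qed

lemma main: assumes u: "u \<in> U" and v: "v \<in> U"
  shows "hu Q m e U v \<otimes>\<^bsub>BijGroup Q\<^esub> hu Q m e U u
         = hu Q m e U (conj_act Q u (hu Q m e U v)) \<otimes>\<^bsub>BijGroup Q\<^esub> hu Q m e U v"
proof -
  let ?G = "BijGroup Q"
  define x where "x = u e"
  define y where "y = v e"
  have xQ: "x \<in> Q" unfolding x_def using Bij_mem[OF U_Bij[OF u] e_in] .
  have yQ: "y \<in> Q" unfolding y_def using Bij_mem[OF U_Bij[OF v] e_in] .
  define H where "H = h0 y"
  have HI: "H \<in> Inn Q m e" unfolding H_def using h0_Inn[OF yQ] .
  have HM: "H \<in> Mlt Q m" and He: "H e = e" using HI by (auto simp: Inn_def)
  have HB: "H \<in> Bij Q" using Mlt_Bij[OF HM] .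
  have HiB: "inv\<^bsub>?G\<^esub> H \<in> Bij Q" using HB G.inv_closed BG_carrier by metis
  have Hie: "(inv\<^bsub>?G\<^esub> H) e = e" using BG_inv_fix[OF HB e_in He] .
  define w where "w = conj_act Q u H"
  have uB: "u \<in> Bij Q" using U_Bij[OF u] .
  have wU: "w \<in> U" unfolding w_def conj_act_def using conj_U[OF HM u] .
  have we: "w e = H x"
  proof -
    have "w e = H (u ((inv\<^bsub>?G\<^esub> H) e))" unfolding w_def conj_act_def
      using BG_app3[OF HB uB HiB e_in] .
    also have "\<dots> = H x" using Hie x_def by simp
    finally show ?thesis .
  qed
  have HxQ: "H x \<in> Q" using Bij_mem[OF HB xQ] .
  have hu_u: "hu Q m e U u = h0 x" using hu_eq[OF u] x_def by simp
  have hu_v: "hu Q m e U v = H" using hu_eq[OF v] y_def H_def by simp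
  have hu_w: "hu Q m e U w = h0 (H x)" using hu_eq[OF wU] we by simp
  define u' where "u' = H \<otimes>\<^bsub>?G\<^esub> u0 x \<otimes>\<^bsub>?G\<^esub> inv\<^bsub>?G\<^esub> H"
  define h' where "h' = H \<otimes>\<^bsub>?G\<^esub> h0 x \<otimes>\<^bsub>?G\<^esub> inv\<^bsub>?G\<^esub> H"
  have u0xU: "u0 x \<in> U" using u0[OF xQ] by blast
  have u0B: "u0 x \<in> Bij Q" using U_Bij[OF u0xU] .
  have h0I: "h0 x \<in> Inn Q m e" using h0_Inn[OF xQ] .
  have h0M: "h0 x \<in> Mlt Q m" and h0e: "h0 x e = e" using h0I by (auto simp: Inn_def)
  have h0B: "h0 x \<in> Bij Q" using Mlt_Bij[OF h0M] .
  have u'U: "u' \<in> U" unfolding u'_def using conj_U[OF HM u0xU] .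
  have h'M: "h' \<in> Mlt Q m" unfolding h'_def
    using HM h0M Mlt_sub by (meson subgroup.m_closed subgroup.m_inv_closed)
  have h'e: "h' e = e"
  proof -
    have "h' e = H (h0 x ((inv\<^bsub>?G\<^esub> H) e))" unfolding h'_def
      using BG_app3[OF HB h0B HiB e_in] .
    also have "\<dots> = e" using Hie h0e He by simp
    finally show ?thesis .
  qed
  have h'I: "h' \<in> Inn Q m e" using h'M h'e by (simp add: Inn_def)
  have RxB: "rtrans Q m x \<in> Bij Q" using rtrans_Bij[OF xQ] .
  have prod: "u' \<otimes>\<^bsub>?G\<^esub> h' = H \<otimes>\<^bsub>?G\<^esub> rtrans Q m x \<otimes>\<^bsub>?G\<^esub> inv\<^bsub>?G\<^esub> H"
    unfolding u'_def h'_def decomp[OF xQ] using HB HiB u0B h0B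
    using G.conj_mult[of H "u0 x" "h0 x"] HB HiB u0B h0B by (simp add: BG_carrier)
  have Rconj: "rtrans Q m (H x) = H \<otimes>\<^bsub>?G\<^esub> rtrans Q m x \<otimes>\<^bsub>?G\<^esub> inv\<^bsub>?G\<^esub> H"
  proof (rule extensionalityI)
    show "rtrans Q m (H x) \<in> extensional Q" by (simp add: rtrans_def)
    have "H \<otimes>\<^bsub>?G\<^esub> rtrans Q m x \<otimes>\<^bsub>?G\<^esub> inv\<^bsub>?G\<^esub> H \<in> Bij Q"
      using HB HiB RxB G.m_closed by (simp add: BG_carrier)
    then show "H \<otimes>\<^bsub>?G\<^esub> rtrans Q m x \<otimes>\<^bsub>?G\<^esub> inv\<^bsub>?G\<^esub> H \<in> extensional Q"
      by (rule Bij_imp_extensional)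
    fix z assume zQ: "z \<in> Q"
    have iz: "(inv\<^bsub>?G\<^esub> H) z \<in> Q" using Bij_mem[OF HiB zQ] .
    have HHi: "H ((inv\<^bsub>?G\<^esub> H) z) = z"
      using BG_inv_app[OF HB zQ] .
    have "(H \<otimes>\<^bsub>?G\<^esub> rtrans Q m x \<otimes>\<^bsub>?G\<^esub> inv\<^bsub>?G\<^esub> H) z
        = H (rtrans Q m x ((inv\<^bsub>?G\<^esub> H) z))"
      using BG_app3[OF HB RxB HiB zQ] .
    also have "\<dots> = H (m ((inv\<^bsub>?G\<^esub> H) z) x)" using iz by (simp add: rtrans_def)
    also have "\<dots> = m z (H x)" using aut HI iz xQ HHi unfolding automorphic_def by metis
    also have "\<dots> = rtrans Q m (H x) z" using zQ by (simp add: rtrans_def)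
    finally show "rtrans Q m (H x) z = (H \<otimes>\<^bsub>?G\<^esub> rtrans Q m x \<otimes>\<^bsub>?G\<^esub> inv\<^bsub>?G\<^esub> H) z" ..
  qed
  have "h' = h0 (H x)" using uniq[OF HxQ u'U h'I] prod Rconj by simp
  then have "h0 (H x) \<otimes>\<^bsub>?G\<^esub> H = H \<otimes>\<^bsub>?G\<^esub> h0 x"
    unfolding h'_def using HB HiB h0B
    using G.conj_back[of H "h0 x"] HB h0B by (simp add: BG_carrier)
  then show ?thesis using hu_u hu_v hu_w w_def by simp
qed

end

theorem lemma4p2:
  fixes Q :: "'a set" and m :: "'a \<Rightarrow> 'a \<Rightarrow> 'a" and e :: 'a and U :: "('a \<Rightarrow> 'a) set"
  assumes loop: "is_loop Q m e" and fin: "finite Q"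
    and simple: "simple_loop Q m e"
    and comm: "commutative_loop Q m"
    and aut: "automorphic Q m e"
    and exp2: "exponent2 Q m e"
    and nonassoc: "\<not> associative_loop Q m"
    and U_def: "U = socle (MltG Q m)"
    and U_normal: "U \<lhd> MltG Q m"
    and U_elab: "\<forall>u\<in>U. \<forall>v\<in>U. u \<otimes>\<^bsub>BijGroup Q\<^esub> v = v \<otimes>\<^bsub>BijGroup Q\<^esub> u \<and>
                   u \<otimes>\<^bsub>BijGroup Q\<^esub> u = \<one>\<^bsub>BijGroup Q\<^esub>"
    and U_regular: "\<forall>x\<in>Q. \<exists>!u. u \<in> U \<and> u e = x"
  shows "\<forall>u\<in>U. \<forall>v\<in>U.
           hu Q m e U v \<otimes>\<^bsub>BijGroup Q\<^esub> hu Q m e U u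
         = hu Q m e U (conj_act Q u (hu Q m e U v)) \<otimes>\<^bsub>BijGroup Q\<^esub> hu Q m e U v"
  using LL.main[OF LL.intro[OF loop aut U_normal U_regular]] by (intro ballI)

end
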